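(* Let $F$ be a dill map with diameter $\delta$ and local rule $f$, and let $M,M'\in\mathbb N$ be such that for every $u\in A^*$ and every $j\in\{0,\dots,|u|-1\}$, $d_L(f^*(D_j(u)),f^*(u))\le M+\frac{|f^*(u)|-|f^*(D_j(u))|}{2}$ and $d_L(f^*(D_j(u)),f^*(u))\le M'-\frac{|f^*(u)|-|f^*(D_j(u))|}{2}$. Then for all $l\in\mathbb N$ and all $u,v\in A^l$, $d_L(f^*(u),f^*(v))\le (M+M')\,d_L(u,v)-\frac{\big||f^*(u)|-|f^*(v)|\big|}{2}$.
   Context: $A$ is a finite alphabet, $A^*$ the finite words, $A^+$ the nonempty finite words, $u_{[i,j)}=u_i\cdots u_{j-1}$. A dill map with diameter $\delta\ge1$ has local rule $f:A^\delta\to A^+$ and is $F(x)=f(x_{[0,\delta)})f(x_{[1,\delta+1)})\cdots$. Its extension $f^*:A^*\to A^*$ is $f^*(u)=f(u_{[0,\delta)})f(u_{[1,\delta+1)})\cdots f(u_{[|u|-\delta,|u|)})$ if $|u|\ge\delta$, and $f^*(u)$ is the empty word if $|u|<\delta$. The deletion $D_j(u)=u_0\cdots u_{j-1}u_{j+1}\cdots u_{|u|-1}$. The Levenshtein distance is $d_L(u,v)=\frac12\min\{m+m': D_{j_1}\circ\cdots\circ D_{j_m}(u)=D_{j'_1}\circ\cdots\circ D_{j'_{m'}}(v)\}$ (equivalently $\frac{|u|+|v|}{2}$ minus the length of a longest common subsequence). *)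

theory Defs
  imports Complex_Main
begin

definition fstar :: "('a list \<Rightarrow> 'a list) \<Rightarrow> nat \<Rightarrow> 'a list \<Rightarrow> 'a list" where
  "fstar f \<delta> u = (if length u < \<delta> then []
     else concat (map (\<lambda>i. f (take \<delta> (drop i u))) [0..<length u - \<delta> + 1]))"

definition del :: "nat \<Rightarrow> 'a list \<Rightarrow> 'a list" where
  "del j u = take j u @ drop (Suc j) u"

text \<open>Composition D_{j1} o ... o D_{jm} applied to u (D_{jm} first); None if some
  index is out of range at the moment it is applied.\<close>
fun dels :: "nat list \<Rightarrow> 'a list \<Rightarrow> 'a list option" where
  "dels [] u = Some u"
| "dels (j # js) u = (case dels js u of None \<Rightarrow> None
      | Some w \<Rightarrow> if j < length w then Some (del j w) else None)"

definition dL :: "'a list \<Rightarrow> 'a list \<Rightarrow> real" where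
  "dL u v = real (Min {length js + length js' | js js'.
       \<exists>w. dels js u = Some w \<and> dels js' v = Some w}) / 2"

end

theory Submission
  imports Defs "HOL-Library.Sublist"
begin

lemma nths_mono_subseq: "A \<subseteq> B \<Longrightarrow> subseq (nths xs A) (nths xs B)"
proof (induction xs arbitrary: A B)
  case Nil then show ?case by simp
next
  case (Cons x xs)
  have "{j. Suc j \<in> A} \<subseteq> {j. Suc j \<in> B}" using Cons.prems by auto
  then have h: "subseq (nths xs {j. Suc j \<in> A}) (nths xs {j. Suc j \<in> B})" using Cons.IH by blast
  show ?case using Cons.prems h by (auto simp: nths_Cons)
qed

lemma del_subseq: "subseq (del j w) w"
proof -
  have "subseq (take j w @ drop (Suc j) w) (take j w @ drop j w)"
  proof (cases "j < length w")
    case True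
    then have "drop j w = w ! j # drop (Suc j) w" by (simp add: Cons_nth_drop_Suc)
    moreover have "subseq (drop (Suc j) w) (w ! j # drop (Suc j) w)" by (rule list_emb_Cons) simp
    ultimately show ?thesis by (simp add: subseq_append')
  next
    case False then show ?thesis by simp
  qed
  then show ?thesis by (simp add: del_def)
qed

lemma length_del: "j < length w \<Longrightarrow> length (del j w) = length w - 1"
  by (simp add: del_def)

lemma dels_subseq: "dels js u = Some w \<Longrightarrow> subseq w u \<and> length w + length js = length u"
proof (induction js arbitrary: w)
  case Nil then show ?case by simp
next
  case (Cons j js)
  then obtain w' where w': "dels js u = Some w'" "j < length w'" "w = del j w'"
    by (auto split: option.splits if_splits)
  with Cons.IH have "subseq w' u \<and> length w' + length js = length u" by blast
  then show ?case using w' del_subseq[of j w'] length_del[of j w']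
    by (auto intro: subseq_order.trans)
qed

lemma dels_rep0: "n \<le> length ys \<Longrightarrow> dels (replicate n 0) ys = Some (drop n ys)"
proof (induction n)
  case 0 then show ?case by simp
next
  case (Suc n)
  then have "dels (replicate n 0) ys = Some (drop n ys)" by simp
  moreover have "del 0 (drop n ys) = drop (Suc n) ys" by (simp add: del_def drop_Suc tl_drop)
  ultimately show ?case using Suc.prems by simp
qed

lemma dels_shift: "dels js ys = Some w \<Longrightarrow> dels (map Suc js) (y#ys) = Some (y#w)"
proof (induction js arbitrary: w)
  case Nil then show ?case by simp
next
  case (Cons j js)
  then obtain w' where w': "dels js ys = Some w'" "j < length w'" "w = del j w'"
    by (auto split: option.splits if_splits)
  then show ?case using Cons.IH by (simp add: del_def)
qed

lemma subseq_dels: "subseq w u \<Longrightarrow> \<exists>js. dels js u = Some w"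
proof (induction rule: list_emb.induct)
  case (list_emb_Nil ys)
  show ?case using dels_rep0[of "length ys" ys] by auto
next
  case (list_emb_Cons xs ys y)
  then obtain js where "dels js ys = Some xs" by blast
  then have "dels (map Suc js) (y#ys) = Some (y#xs)" by (rule dels_shift)
  then have "dels (0 # map Suc js) (y#ys) = Some xs" by (simp add: del_def)
  then show ?case by blast
next
  case (list_emb_Cons2 x y xs ys)
  then obtain js where "dels js ys = Some xs" by blast
  then have "dels (map Suc js) (y#ys) = Some (y#xs)" by (rule dels_shift)
  then show ?case using list_emb_Cons2 by auto
qed

definition CS :: "'a list \<Rightarrow> 'a list \<Rightarrow> nat set" where
  "CS u v = {(length u - length w) + (length v - length w) | w. subseq w u \<and> subseq w v}"

lemma set_eq: "{length js + length js' | js js'. \<exists>w. dels js u = Some w \<and> dels js' v = Some w} = CS u v"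
proof
  show "{length js + length js' | js js'. \<exists>w. dels js u = Some w \<and> dels js' v = Some w} \<subseteq> CS u v"
  proof
    fix n assume "n \<in> {length js + length js' | js js'. \<exists>w. dels js u = Some w \<and> dels js' v = Some w}"
    then obtain js js' w where "n = length js + length js'" "dels js u = Some w" "dels js' v = Some w" by blast
    with dels_subseq[of js u w] dels_subseq[of js' v w] show "n \<in> CS u v"
      unfolding CS_def by (auto intro!: exI[of _ w])
  qed
next
  show "CS u v \<subseteq> {length js + length js' | js js'. \<exists>w. dels js u = Some w \<and> dels js' v = Some w}"
  proof
    fix n assume "n \<in> CS u v"
    then obtain w where w: "n = (length u - length w) + (length v - length w)" "subseq w u" "subseq w v"
      unfolding CS_def by blast
    then obtain js js' where j: "dels js u = Some w" "dels js' v = Some w" using subseq_dels by metis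
    have "n = length js + length js'" using dels_subseq[OF j(1)] dels_subseq[OF j(2)] w by auto
    then show "n \<in> {length js + length js' | js js'. \<exists>w. dels js u = Some w \<and> dels js' v = Some w}"
      using j by blast
  qed
qed

lemma dL_CS: "dL u v = real (Min (CS u v)) / 2"
  unfolding dL_def set_eq ..

lemma CS_fin: "finite (CS u v)"
proof -
  have "CS u v \<subseteq> {..length u + length v}" unfolding CS_def by auto
  then show ?thesis using finite_subset by blast
qed

lemma CS_ne: "CS u v \<noteq> {}"
  unfolding CS_def by auto

lemma dL_le: "subseq w u \<Longrightarrow> subseq w v \<Longrightarrow>
   dL u v \<le> (real (length u) - length w + real (length v) - length w) / 2"
proof -
  assume a: "subseq w u" "subseq w v"
  then have "(length u - length w) + (length v - length w) \<in> CS u v" unfolding CS_def by blast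
  then have "Min (CS u v) \<le> (length u - length w) + (length v - length w)" using CS_fin by (rule Min_le[rotated])
  moreover have "length w \<le> length u" "length w \<le> length v" using a list_emb_length by blast+
  ultimately show ?thesis unfolding dL_CS by simp
qed

lemma dL_attain: "\<exists>w. subseq w u \<and> subseq w v \<and>
   dL u v = (real (length u) - length w + real (length v) - length w) / 2"
proof -
  have "Min (CS u v) \<in> CS u v" using CS_fin CS_ne by (rule Min_in)
  then obtain w where w: "Min (CS u v) = (length u - length w) + (length v - length w)" "subseq w u" "subseq w v"
    unfolding CS_def by blast
  moreover have "length w \<le> length u" "length w \<le> length v" using w list_emb_length by blast+
  ultimately show ?thesis unfolding dL_CS by (intro exI[of _ w]) simp
qed

lemma dL_refl: "dL u u = 0"
proof -
  have "dL u u \<le> 0" using dL_le[of u u u] by simp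
  moreover have "dL u u \<ge> 0" unfolding dL_CS by simp
  ultimately show ?thesis by simp
qed

lemma dL_sym: "dL u v = dL v u"
proof -
  have "CS u v = CS v u" unfolding CS_def by (auto simp: add.commute)
  then show ?thesis unfolding dL_CS by simp
qed

lemma dL_tri: "dL x z \<le> dL x y + dL y z"
proof -
  obtain w1 where w1: "subseq w1 x" "subseq w1 y"
    "dL x y = (real (length x) - length w1 + real (length y) - length w1) / 2"
    using dL_attain by blast
  obtain w2 where w2: "subseq w2 y" "subseq w2 z"
    "dL y z = (real (length y) - length w2 + real (length z) - length w2) / 2"
    using dL_attain by blast
  obtain I where I: "w1 = nths y I" using w1(2) subseq_conv_nths by blast
  obtain J where J: "w2 = nths y J" using w2(1) subseq_conv_nths by blast
  define w where "w = nths y (I \<inter> J)"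
  have s1: "subseq w w1" unfolding w_def I by (rule nths_mono_subseq) auto
  have s2: "subseq w w2" unfolding w_def J by (rule nths_mono_subseq) auto
  have wx: "subseq w x" using s1 w1(1) by (rule subseq_order.trans)
  have wz: "subseq w z" using s2 w2(2) by (rule subseq_order.trans)
  define Y where "Y = {..<length y}"
  have l1: "length w1 = card (Y \<inter> I)" unfolding I Y_def length_nths
    by (rule arg_cong[where f=card]) auto
  have l2: "length w2 = card (Y \<inter> J)" unfolding J Y_def length_nths
    by (rule arg_cong[where f=card]) auto
  have l: "length w = card ((Y \<inter> I) \<inter> (Y \<inter> J))" unfolding w_def Y_def length_nths
    by (rule arg_cong[where f=card]) auto
  have fin: "finite (Y \<inter> I)" "finite (Y \<inter> J)" unfolding Y_def by auto
  have "card ((Y \<inter> I) \<union> (Y \<inter> J)) + card ((Y \<inter> I) \<inter> (Y \<inter> J)) = card (Y \<inter> I) + card (Y \<inter> J)"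
    using card_Un_Int[OF fin] by simp
  moreover have "card ((Y \<inter> I) \<union> (Y \<inter> J)) \<le> length y"
  proof -
    have "card ((Y \<inter> I) \<union> (Y \<inter> J)) \<le> card Y" by (rule card_mono) (auto simp: Y_def)
    then show ?thesis by (simp add: Y_def)
  qed
  ultimately have key: "length w1 + length w2 \<le> length y + length w" using l l1 l2 by linarith
  have keyr: "real (length w1) + real (length w2) \<le> real (length y) + real (length w)"
    using key by (metis of_nat_add of_nat_le_iff)
  have "dL x z \<le> (real (length x) - length w + real (length z) - length w) / 2"
    using dL_le[OF wx wz] .
  also have "\<dots> \<le> dL x y + dL y z" unfolding w1(3) w2(3) using keyr by (simp add: field_simps)
  finally show ?thesis .
qed

lemma del_step: "subseq w x \<Longrightarrow> w \<noteq> x \<Longrightarrow> \<exists>j < length x. subseq w (del j x)"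
proof (induction rule: list_emb.induct)
  case (list_emb_Nil ys)
  then show ?case by (intro exI[of _ 0]) auto
next
  case (list_emb_Cons xs ys y)
  then show ?case by (intro exI[of _ 0]) (auto simp: del_def)
next
  case (list_emb_Cons2 x y xs ys)
  then have "xs \<noteq> ys" by auto
  with list_emb_Cons2 obtain j where "j < length ys" "subseq xs (del j ys)" by blast
  then show ?case using list_emb_Cons2 by (intro exI[of _ "Suc j"]) (auto simp: del_def)
qed

lemma chain:
  fixes F :: "'a list \<Rightarrow> 'b list" and c :: real
  assumes h: "\<forall>u j. j < length u \<longrightarrow>
           dL (F (del j u)) (F u) \<le> real M + c * (real (length (F u)) - real (length (F (del j u)))) / 2"
  shows "subseq w x \<Longrightarrow> dL (F w) (F x) \<le> real (length x - length w) * M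
           + c * (real (length (F x)) - real (length (F w))) / 2"
proof (induction "length x - length w" arbitrary: x)
  case 0
  then have "length x \<le> length w" by simp
  then have "w = x" using 0 subseq_same_length list_emb_length by (metis le_antisym)
  then show ?case by (simp add: dL_refl)
next
  case (Suc n)
  then have "w \<noteq> x" by auto
  with Suc.prems obtain j where j: "j < length x" "subseq w (del j x)" using del_step by blast
  have ld: "length (del j x) = length x - 1" using j length_del by blast
  have IH: "dL (F w) (F (del j x)) \<le> real n * M
           + c * (real (length (F (del j x))) - real (length (F w))) / 2"
  proof -
    have nd: "n = length (del j x) - length w" using Suc.hyps(2) ld by simp
    show ?thesis using Suc.hyps(1)[OF nd j(2)] unfolding nd[symmetric] .
  qed
  have st: "dL (F (del j x)) (F x) \<le> real M + c * (real (length (F x)) - real (length (F (del j x)))) / 2"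
    using h j by blast
  have "dL (F w) (F x) \<le> dL (F w) (F (del j x)) + dL (F (del j x)) (F x)" by (rule dL_tri)
  also have "\<dots> \<le> real n * M + c * (real (length (F (del j x))) - real (length (F w))) / 2
     + (real M + c * (real (length (F x)) - real (length (F (del j x)))) / 2)"
    using IH st by linarith
  also have "\<dots> = real (Suc n) * M + c * (real (length (F x)) - real (length (F w))) / 2"
    by (simp add: algebra_simps add_divide_distrib[symmetric])
  finally show ?case using Suc.hyps(2) by simp
qed

lemma neg_half: "(-1::real) * X / 2 = - (X / 2)" by simp

theorem lemmal:
  fixes f :: "('a::finite) list \<Rightarrow> 'a list" and \<delta> :: nat and M M' :: nat
  assumes "\<delta> \<ge> 1"
    and "\<forall>w. length w = \<delta> \<longrightarrow> f w \<noteq> []"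
    and "\<forall>u j. j < length u \<longrightarrow>
           dL (fstar f \<delta> (del j u)) (fstar f \<delta> u)
             \<le> real M + (real (length (fstar f \<delta> u)) - real (length (fstar f \<delta> (del j u)))) / 2"
    and "\<forall>u j. j < length u \<longrightarrow>
           dL (fstar f \<delta> (del j u)) (fstar f \<delta> u)
             \<le> real M' - (real (length (fstar f \<delta> u)) - real (length (fstar f \<delta> (del j u)))) / 2"
  shows "\<forall>l u v. length u = l \<longrightarrow> length v = l \<longrightarrow>
           dL (fstar f \<delta> u) (fstar f \<delta> v)
             \<le> real (M + M') * dL u v
                - \<bar>real (length (fstar f \<delta> u)) - real (length (fstar f \<delta> v))\<bar> / 2"
proof (intro allI impI)
  fix l and u v :: "'a list"
  assume lu: "length u = l" and lv: "length v = l"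
  let ?F = "fstar f \<delta>"
  have h1: "\<forall>u j. j < length u \<longrightarrow>
           dL (?F (del j u)) (?F u) \<le> real M + 1 * (real (length (?F u)) - real (length (?F (del j u)))) / 2"
    using assms(3) by simp
  have h2: "\<forall>u j. j < length u \<longrightarrow>
           dL (?F (del j u)) (?F u) \<le> real M' + (-1) * (real (length (?F u)) - real (length (?F (del j u)))) / 2"
  proof (intro allI impI)
    fix u :: "'a list" and j assume "j < length u"
    then have hh: "dL (?F (del j u)) (?F u) \<le> real M' - (real (length (?F u)) - real (length (?F (del j u)))) / 2"
      using assms(4) by blast
    show "dL (?F (del j u)) (?F u) \<le> real M' + (-1) * (real (length (?F u)) - real (length (?F (del j u)))) / 2"
    proof -
      have e: "real M' - X / 2 = real M' + (-1) * X / 2" for X :: real by simp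
      show ?thesis using hh e by metis
    qed
  qed
  obtain w where w: "subseq w u" "subseq w v"
    "dL u v = (real (length u) - length w + real (length v) - length w) / 2"
    using dL_attain by blast
  have wu: "length w \<le> length u" "length w \<le> length v" using w list_emb_length by blast+
  define k where "k = length u - length w"
  have kv: "length v - length w = k" using k_def lu lv by simp
  have dk: "dL u v = real k" using w(3) wu lu lv unfolding k_def by simp
  define a where "a = real (length (?F u)) - real (length (?F w))"
  define b where "b = real (length (?F v)) - real (length (?F w))"
  have A1: "dL (?F w) (?F u) \<le> real k * M + a / 2"
    using chain[OF h1 w(1)] unfolding k_def a_def by simp
  have A2: "dL (?F w) (?F u) \<le> real k * M' - a / 2"
    using chain[OF h2 w(1)] unfolding neg_half k_def a_def by linarith
  have B1: "dL (?F w) (?F v) \<le> real k * M + b / 2"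
    using chain[OF h1 w(2)] kv unfolding b_def by simp
  have B2: "dL (?F w) (?F v) \<le> real k * M' - b / 2"
    using chain[OF h2 w(2)] unfolding kv neg_half b_def by linarith
  have T: "dL (?F u) (?F v) \<le> dL (?F w) (?F u) + dL (?F w) (?F v)"
    using dL_tri[where x="?F u" and y="?F w" and z="?F v"] dL_sym[of "?F u" "?F w"] by simp
  have ab: "real (length (?F u)) - real (length (?F v)) = a - b" unfolding a_def b_def by simp
  have "dL (?F u) (?F v) \<le> real k * (M + M') - \<bar>a - b\<bar> / 2"
    using T A1 A2 B1 B2 by (simp add: field_simps abs_if)
  then show "dL (?F u) (?F v) \<le> real (M + M') * dL u v
                - \<bar>real (length (?F u)) - real (length (?F v))\<bar> / 2"
    unfolding dk ab by (simp add: algebra_simps)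
qed

end
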